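(* Let $K$, $\varphi$, $B$ be as below, let $\mu_0\in\mathcal M_B$ with $\mu_0\ge0$, $\lambda_0\ge0$, and let $(\mu_t,\lambda_t)_{t\ge0}$ be the unique solution of $(\mu_t,\lambda_t)=(\mu_0,\lambda_0)+\int_0^tL^B(\mu_s,\lambda_s)ds$. Then for every $t\ge0$, $\mu_t$ is absolutely continuous with respect to $\gamma_0=\sum_{k=1}^\infty\mu_0^{*k}$, where $\mu_0^{*k}$ is the $k$-fold convolution power of $\mu_0$.
   Context: $E=(0,\infty)$. $K:E\times E\to[0,\infty)$ symmetric measurable, $\varphi:E\to(0,\infty)$ continuous sublinear ($\varphi(\lambda x)\le\lambda\varphi(x)$ for $\lambda\ge1$), $K(x,y)\le\varphi(x)\varphi(y)$. $B\subseteq E$ compact; $\mathcal M_B$ the finite signed measures supported on $B$. With $\langle(f,a),(\mu,\lambda)\rangle=\int f\,d\mu+a\lambda$, $L^B$ is defined by $$\langle(f,a),L^B(\mu,\lambda)\rangle=\tfrac12\int_{E\times E}\{f(x+y)1_{x+y\in B}+a\varphi(x+y)1_{x+y\notin B}-f(x)-f(y)\}K(x,y)\mu(dx)\mu(dy)+\lambda\int_E\{a\varphi(x)-f(x)\}\varphi(x)\mu(dx).$$ A solution is a continuous map $[0,\infty)\to\mathcal M_B\times\mathbb R$ satisfying the integral equation; existence and uniqueness of the solution for such data is known. *)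

theory Defs
  imports "HOL-Analysis.Analysis" "HOL-Probability.Convolution"
begin

text \<open>A finite signed measure on the real line is represented by a pair (P, N)
  of finite (positive) Borel measures, standing for P - N. It lies in M_B
  if both parts are supported on B.\<close>

definition in_MB :: "real set \<Rightarrow> real measure \<Rightarrow> real measure \<Rightarrow> bool" where
  "in_MB B P N \<longleftrightarrow> finite_measure P \<and> finite_measure N \<and>
     sets P = sets borel \<and> sets N = sets borel \<and>
     emeasure P (- B) = 0 \<and> emeasure N (- B) = 0"

definition sint :: "real measure \<Rightarrow> real measure \<Rightarrow> (real \<Rightarrow> real) \<Rightarrow> real" where
  "sint P N f = (\<integral>x. f x \<partial>P) - (\<integral>x. f x \<partial>N)"

definition sint2 :: "real measure \<Rightarrow> real measure \<Rightarrow> (real \<Rightarrow> real \<Rightarrow> real) \<Rightarrow> real" where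
  "sint2 P N g = sint P N (\<lambda>y. sint P N (\<lambda>x. g x y))"

text \<open>The pairing < (f,a), L^B(mu,lam) > with mu = P - N.\<close>
definition LB_pair ::
  "(real \<Rightarrow> real \<Rightarrow> real) \<Rightarrow> (real \<Rightarrow> real) \<Rightarrow> real set \<Rightarrow> (real \<Rightarrow> real) \<Rightarrow> real
   \<Rightarrow> real measure \<Rightarrow> real measure \<Rightarrow> real \<Rightarrow> real" where
  "LB_pair K \<phi> B f a P N lam =
     1/2 * sint2 P N (\<lambda>x y. (f (x + y) * indicator B (x + y)
                              + a * \<phi> (x + y) * indicator (- B) (x + y)
                              - f x - f y) * K x y)
     + lam * sint P N (\<lambda>x. (a * \<phi> x - f x) * \<phi> x)"

text \<open>Continuity of t \<mapsto> (mu_t, lam_t) on [0,\<infinity>) in total variation norm times R: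
  the total variation norm of mu is sup over measurable |f| \<le> 1 of |\<integral> f d mu|.\<close>
definition tv_continuous ::
  "(real \<Rightarrow> real measure) \<Rightarrow> (real \<Rightarrow> real measure) \<Rightarrow> (real \<Rightarrow> real) \<Rightarrow> bool" where
  "tv_continuous P N lam \<longleftrightarrow>
     (\<forall>t\<ge>0. \<forall>\<epsilon>>0. \<exists>\<delta>>0. \<forall>s\<ge>0. \<bar>s - t\<bar> < \<delta> \<longrightarrow>
        \<bar>lam s - lam t\<bar> < \<epsilon> \<and>
        (\<forall>f \<in> borel_measurable borel. (\<forall>x. \<bar>f x\<bar> \<le> 1) \<longrightarrow>
            \<bar>sint (P s) (N s) f - sint (P t) (N t) f\<bar> \<le> \<epsilon>))"

fun conv_pow :: "real measure \<Rightarrow> nat \<Rightarrow> real measure" where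
  "conv_pow M 0 = return borel 0"
| "conv_pow M (Suc n) = convolution M (conv_pow M n)"

definition gamma0 :: "real measure \<Rightarrow> real measure" where
  "gamma0 M = measure_of UNIV (sets borel) (\<lambda>A. \<Sum>k. emeasure (conv_pow M (Suc k)) A)"

definition signed_abs_cont :: "real measure \<Rightarrow> real measure \<Rightarrow> real measure \<Rightarrow> bool" where
  "signed_abs_cont G P N \<longleftrightarrow> (\<forall>A \<in> null_sets G. measure P A - measure N A = 0)"

end

theory Submission
  imports Defs
begin


definition nul :: "real measure \<Rightarrow> real set \<Rightarrow> bool" where
  "nul m A \<longleftrightarrow> A \<in> sets borel \<and> (\<forall>k. emeasure (conv_pow m (Suc k)) A = 0)"

lemma fr0: "finite_measure (return borel (0::real))"
  by (rule prob_space.finite_measure, rule prob_space_return) simp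

lemma conv_pow_props:
  assumes "finite_measure m" "sets m = sets borel"
  shows "finite_measure (conv_pow m n) \<and> sets (conv_pow m n) = sets borel"
proof (induction n)
  case 0
  then show ?case by (simp add: fr0)
next
  case (Suc n)
  then show ?case using assms by (simp add: convolution_finite)
qed

lemma conv_return0:
  assumes "finite_measure m" "sets m = sets borel"
  shows "m \<star> return borel (0::real) = m"
proof (rule measure_eqI)
  show "sets (m \<star> return borel 0) = sets m" using assms by simp
  fix A assume "A \<in> sets (m \<star> return borel (0::real))"
  then have A[measurable]: "A \<in> sets borel" by simp
  have "emeasure (m \<star> return borel 0) A = \<integral>\<^sup>+x. \<integral>\<^sup>+y. indicator A (x + y) \<partial>return borel 0 \<partial>m"
    using assms fr0 by (intro convolution_emeasure') auto
  also have "\<dots> = \<integral>\<^sup>+x. indicator A x \<partial>m"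
    by (intro nn_integral_cong) (simp add: nn_integral_return)
  also have "\<dots> = emeasure m A" using assms A by simp
  finally show "emeasure (m \<star> return borel 0) A = emeasure m A" .
qed

lemma conv_pow_add:
  assumes "finite_measure m" "sets m = sets borel"
  shows "(conv_pow m (Suc j) \<star> conv_pow m n) = conv_pow m (Suc j + n)"
proof (induction j)
  case 0
  then show ?case using assms conv_pow_props[OF assms] by (simp add: conv_return0)
next
  case (Suc j)
  have "(conv_pow m (Suc (Suc j)) \<star> conv_pow m n) = ((m \<star> conv_pow m (Suc j)) \<star> conv_pow m n)" by simp
  also have "\<dots> = (m \<star> (conv_pow m (Suc j) \<star> conv_pow m n))"
    using assms conv_pow_props[OF assms] by (intro convolution_associative[symmetric]) (auto simp: convolution_finite)
  also have "\<dots> = conv_pow m (Suc (Suc j) + n)" using Suc by simp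
  finally show ?case .
qed

lemma nul_shift:
  assumes "finite_measure m" "sets m = sets borel" "nul m A"
  shows "nul m {y. \<exists>k. emeasure (conv_pow m (Suc k)) {x. x + y \<in> A} \<noteq> 0}"
proof -
  have A[measurable]: "A \<in> sets borel" using assms unfolding nul_def by auto
  have meas[measurable]: "(\<lambda>y. emeasure (conv_pow m (Suc k)) {x. x + y \<in> A}) \<in> borel_measurable borel" for k
  proof -
    interpret F: finite_measure "conv_pow m (Suc k)" using conv_pow_props[OF assms(1,2)] by blast
    have s: "sets (conv_pow m (Suc k)) = sets borel" using conv_pow_props[OF assms(1,2)] by blast
    have "{(y, x). x + y \<in> A} \<in> sets (borel \<Otimes>\<^sub>M (conv_pow m (Suc k)))"
    proof -
      have "{(y, x). x + y \<in> A} = (\<lambda>(y,x). x + y) -` A \<inter> space (borel \<Otimes>\<^sub>M (borel::real measure))" by (auto simp: space_pair_measure)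
      also have "\<dots> \<in> sets (borel \<Otimes>\<^sub>M borel)" by (rule measurable_sets[OF _ A]) measurable
      finally show ?thesis unfolding sets_pair_measure_cong[OF refl s] .
    qed
    from F.measurable_emeasure_Pair[OF this] show ?thesis by (simp add: vimage_def)
  qed
  have Z: "emeasure (conv_pow m (Suc j)) {y. emeasure (conv_pow m (Suc k)) {x. x + y \<in> A} \<noteq> 0} = 0" for j k
  proof -
    have s1: "sets (conv_pow m (Suc j)) = sets borel" "finite_measure (conv_pow m (Suc j))"
      and s2: "sets (conv_pow m (Suc k)) = sets borel" "finite_measure (conv_pow m (Suc k))"
      using conv_pow_props[OF assms(1,2)] by blast+
    have "(\<integral>\<^sup>+y. emeasure (conv_pow m (Suc k)) {x. x + y \<in> A} \<partial>conv_pow m (Suc j))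
        = emeasure (conv_pow m (Suc j) \<star> conv_pow m (Suc k)) A"
      using s1 s2 by (intro convolution_emeasure[symmetric]) auto
    also have "\<dots> = emeasure (conv_pow m (Suc (j + Suc k))) A" using conv_pow_add[OF assms(1,2), of j "Suc k"] by simp
    also have "\<dots> = 0" using assms(3) unfolding nul_def by blast
    moreover have mk: "(\<lambda>y. emeasure (conv_pow m (Suc k)) {x. x + y \<in> A}) \<in> borel_measurable (conv_pow m (Suc j))"
      using meas[of k] measurable_cong_sets[OF s1(1) refl] by blast
    ultimately have "AE y in conv_pow m (Suc j). emeasure (conv_pow m (Suc k)) {x. x + y \<in> A} = 0"
      using nn_integral_0_iff_AE[OF mk] by simp
    then show ?thesis
      by (subst (asm) AE_iff_measurable[OF _ refl]) (use mk in \<open>auto simp: sets_eq_imp_space_eq[OF s1(1)]\<close>)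
  qed
  have eq: "{y. \<exists>k. emeasure (conv_pow m (Suc k)) {x. x + y \<in> A} \<noteq> 0}
     = (\<Union>k. {y. emeasure (conv_pow m (Suc k)) {x. x + y \<in> A} \<noteq> 0})" by auto
  show ?thesis unfolding nul_def eq
  proof (intro conjI allI)
    show "(\<Union>k. {y. emeasure (conv_pow m (Suc k)) {x. x + y \<in> A} \<noteq> 0}) \<in> sets borel" by measurable
    fix j
    have s1: "sets (conv_pow m (Suc j)) = sets borel"
      using conv_pow_props[OF assms(1,2)] by blast
    show "emeasure (conv_pow m (Suc j)) (\<Union>k. {y. emeasure (conv_pow m (Suc k)) {x. x + y \<in> A} \<noteq> 0}) = 0"
    proof (rule emeasure_UN_eq_0)
      show "emeasure (conv_pow m (Suc j)) {y. emeasure (conv_pow m (Suc k)) {x. x + y \<in> A} \<noteq> 0} = 0" for k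
        by (rule Z)
      show "range (\<lambda>k. {y. emeasure (conv_pow m (Suc k)) {x. x + y \<in> A} \<noteq> 0}) \<subseteq> sets (conv_pow m (Suc j))"
        unfolding s1
      proof clarify
        fix k
        have "{y. emeasure (conv_pow m (Suc k)) {x. x + y \<in> A} \<noteq> 0}
          = (\<lambda>y. emeasure (conv_pow m (Suc k)) {x. x + y \<in> A}) -` (- {0}) \<inter> space borel" by auto
        also have "\<dots> \<in> sets borel"
          by (rule measurable_sets[OF meas[of k]]) (simp add: borel_open open_Compl)
        finally show "{y. emeasure (conv_pow m (Suc k)) {x. x + y \<in> A} \<noteq> 0} \<in> sets borel" .
      qed
    qed
  qed
qed

lemma gamma0_emeasure:
  assumes "finite_measure m" "sets m = sets borel" "A \<in> sets borel"
  shows "emeasure (gamma0 m) A = (\<Sum>k. emeasure (conv_pow m (Suc k)) A)"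
  unfolding gamma0_def
proof (rule emeasure_measure_of_sigma)
  show "sigma_algebra UNIV (sets (borel::real measure))"
    using sets.sigma_algebra_axioms[of "borel::real measure"] by simp
  show "positive (sets borel) (\<lambda>A. \<Sum>k. emeasure (conv_pow m (Suc k)) A)"
    unfolding positive_def by simp
  show "A \<in> sets borel" by fact
  show "countably_additive (sets borel) (\<lambda>A. \<Sum>k. emeasure (conv_pow m (Suc k)) A)"
    unfolding countably_additive_def
  proof (intro allI impI)
    fix F :: "nat \<Rightarrow> real set"
    assume F: "range F \<subseteq> sets borel" "disjoint_family F" "\<Union> (range F) \<in> sets borel"
    have s: "sets (conv_pow m (Suc k)) = sets borel" for k
      using conv_pow_props[OF assms(1,2)] by blast
    have "(\<Sum>i. \<Sum>k. emeasure (conv_pow m (Suc k)) (F i))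
        = (\<Sum>i. \<integral>\<^sup>+k. emeasure (conv_pow m (Suc k)) (F i) \<partial>count_space UNIV)"
      by (simp add: nn_integral_count_space_nat)
    also have "\<dots> = (\<integral>\<^sup>+k. (\<Sum>i. emeasure (conv_pow m (Suc k)) (F i)) \<partial>count_space UNIV)"
      by (rule nn_integral_suminf[symmetric]) simp
    also have "\<dots> = (\<integral>\<^sup>+k. emeasure (conv_pow m (Suc k)) (\<Union> (range F)) \<partial>count_space UNIV)"
      using F s by (intro nn_integral_cong suminf_emeasure) auto
    also have "\<dots> = (\<Sum>k. emeasure (conv_pow m (Suc k)) (\<Union> (range F)))"
      by (simp add: nn_integral_count_space_nat)
    finally show "(\<Sum>i. \<Sum>k. emeasure (conv_pow m (Suc k)) (F i)) = (\<Sum>k. emeasure (conv_pow m (Suc k)) (\<Union> (range F)))" .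
  qed
qed

lemma gamma0_null:
  assumes "finite_measure m" "sets m = sets borel" "A \<in> null_sets (gamma0 m)"
  shows "nul m A"
proof -
  have sa: "sigma_algebra UNIV (sets (borel::real measure))"
    using sets.sigma_algebra_axioms[of "borel::real measure"] by simp
  have sg: "sets (gamma0 m) = sets borel" unfolding gamma0_def
    using sigma_algebra.sigma_sets_eq[OF sa] by simp
  have A: "A \<in> sets borel" using assms(3) sg by auto
  have "(\<Sum>k. emeasure (conv_pow m (Suc k)) A) = 0"
    using assms(3) gamma0_emeasure[OF assms(1,2) A] by auto
  then have "\<forall>k. emeasure (conv_pow m (Suc k)) A = 0"
    by (subst (asm) suminf_eq_zero_iff[OF summableI]) auto
  then show ?thesis unfolding nul_def using A by blast
qed



definition supv :: "real measure \<Rightarrow> real measure \<Rightarrow> real set set \<Rightarrow> real" where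
  "supv P N \<A> = Sup {\<bar>sint P N f\<bar> | f. f \<in> borel_measurable borel \<and> (\<forall>x. \<bar>f x\<bar> \<le> 1) \<and> (\<exists>A\<in>\<A>. \<forall>x. x \<notin> A \<longrightarrow> f x = 0)}"

lemma MB_facts:
  assumes "in_MB B P N"
  shows "finite_measure P" "finite_measure N" "sets P = sets borel" "sets N = sets borel"
    "space P = UNIV" "space N = UNIV" "measurable P = measurable borel" "measurable N = measurable borel"
    "emeasure P (- B) = 0" "emeasure N (- B) = 0"
proof -
  have P: "finite_measure P" "sets P = sets borel" "emeasure P (- B) = 0"
    and N: "finite_measure N" "sets N = sets borel" "emeasure N (- B) = 0"
    using assms unfolding in_MB_def by auto
  show "finite_measure P" "finite_measure N" "sets P = sets borel" "sets N = sets borel"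
    "emeasure P (- B) = 0" "emeasure N (- B) = 0" using P N by auto
  show "space P = UNIV" using sets_eq_imp_space_eq[OF P(2)] by simp
  show "space N = UNIV" using sets_eq_imp_space_eq[OF N(2)] by simp
  show "measurable P = measurable borel" by (rule ext, rule measurable_cong_sets[OF P(2) refl])
  show "measurable N = measurable borel" by (rule ext, rule measurable_cong_sets[OF N(2) refl])
qed

lemma fm_int_bound:
  fixes M :: "real measure"
  assumes "finite_measure M" "f \<in> borel_measurable M" "\<And>x. \<bar>f x\<bar> \<le> c"
  shows "\<bar>\<integral>x. f x \<partial>M\<bar> \<le> c * measure M (space M)"
proof -
  interpret finite_measure M by fact
  have i: "integrable M f" using assms by (intro integrable_const_bound[where B=c]) auto
  have "\<bar>\<integral>x. f x \<partial>M\<bar> \<le> (\<integral>x. c \<partial>M)"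
    using assms i by (intro integral_abs_bound_integral) auto
  then show ?thesis by (simp add: mult.commute)
qed

lemma sint_bound_total:
  assumes "in_MB B P N" "f \<in> borel_measurable borel" "\<And>x. \<bar>f x\<bar> \<le> 1"
  shows "\<bar>sint P N f\<bar> \<le> measure P UNIV + measure N UNIV"
proof -
  note F = MB_facts[OF assms(1)]
  have "\<bar>\<integral>x. f x \<partial>P\<bar> \<le> 1 * measure P (space P)"
    using assms F by (intro fm_int_bound) auto
  moreover have "\<bar>\<integral>x. f x \<partial>N\<bar> \<le> 1 * measure N (space N)"
    using assms F by (intro fm_int_bound) auto
  ultimately show ?thesis unfolding sint_def F by simp
qed

lemma supv_bdd:
  assumes "in_MB B P N"
  shows "bdd_above {\<bar>sint P N f\<bar> | f. f \<in> borel_measurable borel \<and> (\<forall>x. \<bar>f x\<bar> \<le> 1) \<and> (\<exists>A\<in>\<A>. \<forall>x. x \<notin> A \<longrightarrow> f x = 0)}"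
  using sint_bound_total[OF assms] by (intro bdd_aboveI[where M="measure P UNIV + measure N UNIV"]) blast

lemma supv_upper:
  assumes "in_MB B P N" "f \<in> borel_measurable borel" "\<And>x. \<bar>f x\<bar> \<le> 1" "A \<in> \<A>" "\<And>x. x \<notin> A \<Longrightarrow> f x = 0"
  shows "\<bar>sint P N f\<bar> \<le> supv P N \<A>"
  unfolding supv_def using assms by (intro cSup_upper[OF _ supv_bdd[OF assms(1)]]) blast

lemma supv_nonneg:
  assumes "in_MB B P N" "A \<in> \<A>"
  shows "0 \<le> supv P N \<A>"
  using supv_upper[OF assms(1), of "\<lambda>x. 0" A \<A>] assms by (simp add: sint_def)

lemma supv_least:
  assumes "A \<in> \<A>"
    "\<And>f A. f \<in> borel_measurable borel \<Longrightarrow> (\<And>x. \<bar>f x\<bar> \<le> 1) \<Longrightarrow> A \<in> \<A> \<Longrightarrow> (\<And>x. x \<notin> A \<Longrightarrow> f x = 0) \<Longrightarrow> \<bar>sint P N f\<bar> \<le> c"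
  shows "supv P N \<A> \<le> c"
  unfolding supv_def
proof (rule cSup_least)
  show "{\<bar>sint P N f\<bar> | f. f \<in> borel_measurable borel \<and> (\<forall>x. \<bar>f x\<bar> \<le> 1) \<and> (\<exists>A\<in>\<A>. \<forall>x. x \<notin> A \<longrightarrow> f x = 0)} \<noteq> {}"
    using assms(1) by (intro ex_in_conv[THEN iffD1]) (rule exI[of _ "\<bar>sint P N (\<lambda>x. 0)\<bar>"], auto)
qed (use assms(2) in blast)

lemma sint_nonmeas:
  assumes "in_MB B P N" "h \<notin> borel_measurable borel"
  shows "sint P N h = 0"
proof -
  note F = MB_facts[OF assms(1)]
  have "\<not> integrable P h" "\<not> integrable N h"
    using assms(2) F by auto
  then show ?thesis unfolding sint_def by (simp add: not_integrable_integral_eq)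
qed

lemma AE_BZ:
  assumes "in_MB B P N" "B \<in> sets borel" "Z \<in> sets borel" "emeasure P Z = 0" "emeasure N Z = 0"
  shows "AE x in P. x \<in> B - Z" "AE x in N. x \<in> B - Z"
proof -
  note F = MB_facts[OF assms(1)]
  have "- B \<in> null_sets P" "Z \<in> null_sets P" using F assms by (auto simp: null_sets_def)
  then have "- B \<union> Z \<in> null_sets P" by (rule null_sets.Un)
  then show "AE x in P. x \<in> B - Z" by (rule AE_I') auto
  have "- B \<in> null_sets N" "Z \<in> null_sets N" using F assms by (auto simp: null_sets_def)
  then have "- B \<union> Z \<in> null_sets N" by (rule null_sets.Un)
  then show "AE x in N. x \<in> B - Z" by (rule AE_I') auto
qed

lemma sint_integrable:
  fixes h :: "real \<Rightarrow> real" and c :: real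
  assumes "in_MB B P N" "B \<in> sets borel" "Z \<in> sets borel" "emeasure P Z = 0" "emeasure N Z = 0"
    "h \<in> borel_measurable borel" "\<And>x. x \<in> B \<Longrightarrow> x \<notin> Z \<Longrightarrow> \<bar>h x\<bar> \<le> c"
  shows "integrable P h" "integrable N h"
proof -
  note F = MB_facts[OF assms(1)]
  note ae = AE_BZ[OF assms(1-5)]
  have b1: "AE x in P. norm (h x) \<le> c" using ae(1) by eventually_elim (use assms(7) in auto)
  have b2: "AE x in N. norm (h x) \<le> c" using ae(2) by eventually_elim (use assms(7) in auto)
  show "integrable P h"
    using b1 assms(6) F by (intro finite_measure.integrable_const_bound[where B=c]) auto
  show "integrable N h"
    using b2 assms(6) F by (intro finite_measure.integrable_const_bound[where B=c]) auto
qed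

lemma key_bound:
  assumes "in_MB B P N" "B \<in> sets borel" "Z \<in> sets borel" "emeasure P Z = 0" "emeasure N Z = 0"
    "A \<in> \<A>" "\<And>x. x \<notin> A \<Longrightarrow> h x = 0" "\<And>x. x \<in> B \<Longrightarrow> x \<notin> Z \<Longrightarrow> \<bar>h x\<bar> \<le> c" "c \<ge> 0"
  shows "\<bar>sint P N h\<bar> \<le> c * supv P N \<A>"
proof (cases "h \<in> borel_measurable borel")
  case False
  then show ?thesis using sint_nonmeas[OF assms(1) False] supv_nonneg[OF assms(1,6)] assms(9) by simp
next
  case True
  note F = MB_facts[OF assms(1)]
  note ae = AE_BZ[OF assms(1-5)]
  define h' where "h' x = h x * indicator (B - Z) x" for x
  have h'm: "h' \<in> borel_measurable borel" unfolding h'_def using True assms(2,3) by measurable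
  have e1: "AE x in P. h x = h' x" using ae(1) by eventually_elim (auto simp: h'_def)
  have e2: "AE x in N. h x = h' x" using ae(2) by eventually_elim (auto simp: h'_def)
  have "(\<integral>x. h x \<partial>P) = (\<integral>x. h' x \<partial>P)"
    using e1 True h'm F by (intro integral_cong_AE) auto
  moreover have "(\<integral>x. h x \<partial>N) = (\<integral>x. h' x \<partial>N)"
    using e2 True h'm F by (intro integral_cong_AE) auto
  ultimately have eq: "sint P N h = sint P N h'" unfolding sint_def by simp
  show ?thesis
  proof (cases "c = 0")
    case True
    then have "h' = (\<lambda>x. 0)" using assms(8) unfolding h'_def by (auto simp: indicator_def fun_eq_iff)
    then show ?thesis using eq True by (simp add: sint_def)
  next
    case False
    define f where "f x = h' x / c" for x
    have "\<bar>sint P N f\<bar> \<le> supv P N \<A>"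
    proof (rule supv_upper[OF assms(1) _ _ assms(6)])
      show "f \<in> borel_measurable borel" unfolding f_def using h'm by measurable
      show "\<bar>f x\<bar> \<le> 1" for x using assms(8,9) False unfolding f_def h'_def
        by (auto simp: indicator_def divide_le_eq_1 abs_divide)
      show "f x = 0" if "x \<notin> A" for x using assms(7)[OF that] unfolding f_def h'_def by simp
    qed
    moreover have "sint P N h' = c * sint P N f"
    proof -
      have "h' = (\<lambda>x. c * f x)" using False unfolding f_def by auto
      then show ?thesis unfolding sint_def by (simp add: algebra_simps)
    qed
    ultimately show ?thesis using eq assms(9) by (simp add: abs_mult mult_left_mono)
  qed
qed



lemma nul_UN:
  fixes F :: "nat \<Rightarrow> real set"
  assumes "finite_measure m" "sets m = sets borel" "\<And>i. nul m (F i)"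
  shows "nul m (\<Union>i. F i)"
  unfolding nul_def
proof (intro conjI allI)
  show "(\<Union>i. F i) \<in> sets borel" using assms(3) unfolding nul_def by (intro sets.countable_UN'') auto
  fix k
  have s: "sets (conv_pow m (Suc k)) = sets borel" using conv_pow_props[OF assms(1,2)] by blast
  show "emeasure (conv_pow m (Suc k)) (\<Union>i. F i) = 0"
    by (rule emeasure_UN_eq_0) (use assms(3) s in \<open>auto simp: nul_def\<close>)
qed

lemma nul_Un:
  assumes "finite_measure m" "sets m = sets borel" "nul m A" "nul m C"
  shows "nul m (A \<union> C)"
  unfolding nul_def
proof (intro conjI allI)
  show "A \<union> C \<in> sets borel" using assms(3,4) unfolding nul_def by blast
  fix k
  have s: "sets (conv_pow m (Suc k)) = sets borel" using conv_pow_props[OF assms(1,2)] by blast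
  have "emeasure (conv_pow m (Suc k)) (A \<union> C) \<le> emeasure (conv_pow m (Suc k)) A + emeasure (conv_pow m (Suc k)) C"
    using assms(3,4) s unfolding nul_def by (intro emeasure_subadditive) auto
  then show "emeasure (conv_pow m (Suc k)) (A \<union> C) = 0" using assms(3,4) unfolding nul_def by simp
qed

lemma nul_empty: "nul m {}" unfolding nul_def by simp

lemma nul_subset:
  assumes "finite_measure m" "sets m = sets borel" "nul m A" "C \<subseteq> A" "C \<in> sets borel"
  shows "nul m C"
  unfolding nul_def
proof (intro conjI allI)
  show "C \<in> sets borel" by fact
  fix k
  have s: "sets (conv_pow m (Suc k)) = sets borel" using conv_pow_props[OF assms(1,2)] by blast
  have "emeasure (conv_pow m (Suc k)) C \<le> emeasure (conv_pow m (Suc k)) A"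
    using assms s unfolding nul_def by (intro emeasure_mono) auto
  then show "emeasure (conv_pow m (Suc k)) C = 0" using assms(3) unfolding nul_def by simp
qed

lemma exists_max_nul:
  assumes "finite_measure m" "sets m = sets borel" "in_MB B P N"
  shows "\<exists>D. nul m D \<and> (\<forall>E. nul m E \<longrightarrow> emeasure P (E - D) = 0 \<and> emeasure N (E - D) = 0)"
proof -
  note F = MB_facts[OF assms(3)]
  interpret P: finite_measure P by (rule F(1))
  interpret N: finite_measure N by (rule F(2))
  define Q where "Q E = measure P E + measure N E" for E
  define S where "S = {Q E | E. nul m E}"
  have bd: "Q E \<le> measure P (space P) + measure N (space N)" for E
    unfolding Q_def using P.bounded_measure[of E] N.bounded_measure[of E] by linarith
  have bdd: "bdd_above S" unfolding S_def
    by (rule bdd_aboveI[where M="measure P (space P) + measure N (space N)"]) (use bd in blast)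
  have ne: "S \<noteq> {}" unfolding S_def using nul_empty by blast
  define \<sigma> where "\<sigma> = Sup S"
  have up: "Q E \<le> \<sigma>" if "nul m E" for E unfolding \<sigma>_def
    using that bdd by (intro cSup_upper) (auto simp: S_def)
  have "\<exists>E. nul m E \<and> Q E > \<sigma> - 1 / (Suc n)" for n
  proof (rule ccontr)
    assume "\<not> ?thesis"
    then have "\<forall>x\<in>S. x \<le> \<sigma> - 1 / Suc n" unfolding S_def by (auto simp: not_less)
    then have "\<sigma> \<le> \<sigma> - 1 / Suc n" unfolding \<sigma>_def using ne by (intro cSup_least) auto
    then show False by simp
  qed
  then have "\<forall>n. \<exists>E. nul m E \<and> Q E > \<sigma> - 1 / (Suc n)" by blast
  then obtain E where E0: "\<forall>n. nul m (E n) \<and> Q (E n) > \<sigma> - 1 / (Suc n)" by (rule choice[THEN exE])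
  then have E: "\<And>n. nul m (E n)" "\<And>n. Q (E n) > \<sigma> - 1 / (Suc n)" by auto
  define D where "D = (\<Union>n. E n)"
  have nD: "nul m D" unfolding D_def by (rule nul_UN[OF assms(1,2) E(1)])
  have Dm: "D \<in> sets borel" using nD unfolding nul_def by blast
  have QD: "Q (E n) \<le> Q D" for n
  proof -
    have "E n \<subseteq> D" unfolding D_def by blast
    moreover have "D \<in> sets P" "D \<in> sets N" using Dm F(3,4) by auto
    ultimately show ?thesis unfolding Q_def
      using P.finite_measure_mono[of "E n" D] N.finite_measure_mono[of "E n" D] by linarith
  qed
  show ?thesis
  proof (intro exI conjI allI impI)
    show "nul m D" by fact
    fix E' assume nE: "nul m E'"
    have Em: "E' \<in> sets borel" using nE unfolding nul_def by blast
    have "Q (D \<union> E') \<le> \<sigma>" by (rule up[OF nul_Un[OF assms(1,2) nD nE]])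
    moreover have "Q (D \<union> E') = Q D + Q (E' - D)"
    proof -
      have m: "D \<in> sets P" "D \<in> sets N" "E' - D \<in> sets P" "E' - D \<in> sets N" using Dm Em F(3,4) by auto
      have d: "D \<inter> (E' - D) = {}" by blast
      have u: "D \<union> E' = D \<union> (E' - D)" by blast
      have "measure P (D \<union> (E' - D)) = measure P D + measure P (E' - D)"
        by (rule P.finite_measure_Union[OF m(1,3) d])
      moreover have "measure N (D \<union> (E' - D)) = measure N D + measure N (E' - D)"
        by (rule N.finite_measure_Union[OF m(2,4) d])
      ultimately show ?thesis unfolding Q_def u by simp
    qed
    ultimately have le: "Q (E' - D) \<le> 1 / Suc n" for n using QD[of n] E(2)[of n] by linarith
    have "Q (E' - D) \<le> 0"
    proof (rule field_le_epsilon)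
      fix e :: real assume "e > 0"
      then obtain n where "1 / Suc n < e" using nat_approx_posE by blast
      then show "Q (E' - D) \<le> 0 + e" using le[of n] by simp
    qed
    then have "measure P (E' - D) = 0" "measure N (E' - D) = 0" unfolding Q_def
      using measure_nonneg[of P "E' - D"] measure_nonneg[of N "E' - D"] by linarith+
    then show "emeasure P (E' - D) = 0" "emeasure N (E' - D) = 0"
      by (simp_all add: P.emeasure_eq_measure N.emeasure_eq_measure)
  qed
qed



lemma sint_add:
  assumes "integrable P f" "integrable P g" "integrable N f" "integrable N g"
  shows "sint P N (\<lambda>x. f x + g x) = sint P N f + sint P N g"
  unfolding sint_def using assms by simp

lemma G_bound_abs:
  fixes f :: "real \<Rightarrow> real"
  assumes "\<And>x. \<bar>f x\<bar> \<le> 1" "0 \<le> k" "k \<le> c"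
  shows "\<bar>(f (x + y) * indicator B (x + y) + 0 * \<phi> (x + y) * indicator (- B) (x + y) - f x - f y) * k\<bar> \<le> 3 * c"
proof -
  have "\<bar>f (x + y) * indicator B (x + y)\<bar> \<le> 1" using assms(1)[of "x+y"] by (auto simp: indicator_def)
  then have "\<bar>f (x + y) * indicator B (x + y) + 0 * \<phi> (x + y) * indicator (- B) (x + y) - f x - f y\<bar> \<le> 3"
    using assms(1)[of x] assms(1)[of y] by simp
  then have "\<bar>(f (x + y) * indicator B (x + y) + 0 * \<phi> (x + y) * indicator (- B) (x + y) - f x - f y) * k\<bar> \<le> 3 * k"
    using assms(2) by (simp add: abs_mult mult_right_mono)
  then show ?thesis using assms(3) by simp
qed

lemma G_bound_abs2:
  fixes f :: "real \<Rightarrow> real"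
  assumes "\<And>x. \<bar>f x\<bar> \<le> 1" "0 \<le> k" "k \<le> c" "f y = 0"
  shows "\<bar>(f (x + y) * indicator B (x + y) + 0 * \<phi> (x + y) * indicator (- B) (x + y) - f x - f y) * k\<bar> \<le> 2 * c"
proof -
  have "\<bar>f (x + y) * indicator B (x + y)\<bar> \<le> 1" using assms(1)[of "x+y"] by (auto simp: indicator_def)
  then have "\<bar>f (x + y) * indicator B (x + y) + 0 * \<phi> (x + y) * indicator (- B) (x + y) - f x - f y\<bar> \<le> 2"
    using assms(1)[of x] assms(4) by simp
  then have "\<bar>(f (x + y) * indicator B (x + y) + 0 * \<phi> (x + y) * indicator (- B) (x + y) - f x - f y) * k\<bar> \<le> 2 * k"
    using assms(2) by (simp add: abs_mult mult_right_mono)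
  then show ?thesis using assms(3) by simp
qed

lemma LB_bound:
  fixes K :: "real \<Rightarrow> real \<Rightarrow> real" and \<phi> :: "real \<Rightarrow> real" and f :: "real \<Rightarrow> real"
  assumes m: "finite_measure m" "sets m = sets borel"
    and MB: "in_MB B P N" and Bm: "B \<in> sets borel"
    and Kb: "\<And>x y. x \<in> B \<Longrightarrow> y \<in> B \<Longrightarrow> 0 \<le> K x y \<and> K x y \<le> \<Phi>\<^sup>2"
    and \<Phi>: "\<Phi> \<ge> 0" and \<phi>b: "\<And>x. x \<in> B \<Longrightarrow> \<bar>\<phi> x\<bar> \<le> \<Phi>"
    and f: "f \<in> borel_measurable borel" "\<And>x. \<bar>f x\<bar> \<le> 1" and A: "nul m A" "\<And>x. x \<notin> A \<Longrightarrow> f x = 0"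
  shows "\<bar>LB_pair K \<phi> B f 0 P N l\<bar>
     \<le> (5/2 * \<Phi>\<^sup>2 * supv P N {UNIV} + \<bar>l\<bar> * \<Phi>) * supv P N (Collect (nul m))"
proof -
  define nrm where "nrm = supv P N {UNIV}"
  define g where "g = supv P N (Collect (nul m))"
  have nrm0: "nrm \<ge> 0" unfolding nrm_def by (rule supv_nonneg[OF MB]) simp
  have g0: "g \<ge> 0" unfolding g_def by (rule supv_nonneg[OF MB, of "{}"]) (simp add: nul_empty)
  note F = MB_facts[OF MB]
  define G where "G x y = (f (x + y) * indicator B (x + y) + 0 * \<phi> (x + y) * indicator (- B) (x + y) - f x - f y) * K x y" for x y
  define H where "H y = sint P N (\<lambda>x. G x y)" for y
  have LBeq: "LB_pair K \<phi> B f 0 P N l = 1/2 * sint P N H + l * sint P N (\<lambda>x. (0 * \<phi> x - f x) * \<phi> x)"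
    unfolding LB_pair_def sint2_def H_def G_def by simp
  have T2: "\<bar>sint P N (\<lambda>x. (0 * \<phi> x - f x) * \<phi> x)\<bar> \<le> \<Phi> * g"
    unfolding g_def
  proof (rule key_bound[OF MB Bm, of "{}"])
    show "A \<in> Collect (nul m)" using A by simp
    show "(0 * \<phi> x - f x) * \<phi> x = 0" if "x \<notin> A" for x using A(2)[OF that] by simp
    show "\<bar>(0 * \<phi> x - f x) * \<phi> x\<bar> \<le> \<Phi>" if "x \<in> B" "x \<notin> {}" for x
    proof -
      have "\<bar>f x\<bar> * \<bar>\<phi> x\<bar> \<le> 1 * \<Phi>" using f(2)[of x] \<phi>b[OF that(1)] by (intro mult_mono) auto
      then show ?thesis by (simp add: abs_mult)
    qed
  qed (use \<Phi> in auto)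
  obtain D0 where D0: "nul m D0" "\<And>E. nul m E \<Longrightarrow> emeasure P (E - D0) = 0 \<and> emeasure N (E - D0) = 0"
    using exists_max_nul[OF m MB] by blast
  define ZA where "ZA = {y. \<exists>k. emeasure (conv_pow m (Suc k)) {x. x + y \<in> A} \<noteq> 0}"
  have nZA: "nul m ZA" unfolding ZA_def by (rule nul_shift[OF m A(1)])
  define D where "D = A \<union> D0 \<union> ZA"
  have nD: "nul m D" unfolding D_def by (intro nul_Un[OF m] nZA D0(1) A(1))
  have Dm: "D \<in> sets borel" using nD unfolding nul_def by blast
  have Am: "A \<in> sets borel" using A(1) unfolding nul_def by blast
  have H1: "\<bar>H y\<bar> \<le> 3 * \<Phi>\<^sup>2 * nrm" if "y \<in> B" for y
    unfolding H_def nrm_def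
  proof (rule key_bound[OF MB Bm, of "{}"])
    show "\<bar>G x y\<bar> \<le> 3 * \<Phi>\<^sup>2" if "x \<in> B" "x \<notin> {}" for x
      unfolding G_def using Kb[OF that(1) \<open>y \<in> B\<close>] f(2) by (intro G_bound_abs) auto
  qed (use \<Phi> in auto)
  have H2: "\<bar>H y\<bar> \<le> 2 * \<Phi>\<^sup>2 * g" if y: "y \<in> B" "y \<notin> D" for y
  proof (cases "(\<lambda>x. G x y) \<in> borel_measurable borel")
    case False
    then show ?thesis unfolding H_def using sint_nonmeas[OF MB False] g0 \<Phi> by simp
  next
    case True
    have fy: "f y = 0" using A(2) y(2) unfolding D_def by blast
    define G1 where "G1 x = G x y * indicator D x" for x
    define G2 where "G2 x = G x y * indicator (- D) x" for x
    have G1m: "G1 \<in> borel_measurable borel" unfolding G1_def using True Dm by measurable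
    have G2m: "G2 \<in> borel_measurable borel" unfolding G2_def using True Dm by measurable
    have Gb: "\<bar>G x y\<bar> \<le> 3 * \<Phi>\<^sup>2" if "x \<in> B" for x
      unfolding G_def using Kb[OF that \<open>y \<in> B\<close>] f(2) by (intro G_bound_abs) auto
    have i1: "integrable P G1" "integrable N G1"
      using Gb by (intro sint_integrable[OF MB Bm, of "{}" _ "3 * \<Phi>\<^sup>2"] G1m; auto simp: G1_def indicator_def)+
    have i2: "integrable P G2" "integrable N G2"
      using Gb by (intro sint_integrable[OF MB Bm, of "{}" _ "3 * \<Phi>\<^sup>2"] G2m; auto simp: G2_def indicator_def)+
    have "H y = sint P N (\<lambda>x. G1 x + G2 x)"
      unfolding H_def G1_def G2_def by (rule arg_cong[where f="sint P N"]) (auto simp: indicator_def fun_eq_iff)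
    also have "\<dots> = sint P N G1 + sint P N G2" by (rule sint_add[OF i1(1) i2(1) i1(2) i2(2)])
    finally have Hy: "H y = sint P N G1 + sint P N G2" .
    have b1: "\<bar>sint P N G1\<bar> \<le> 2 * \<Phi>\<^sup>2 * g"
      unfolding g_def
    proof (rule key_bound[OF MB Bm, of "{}"])
      show "D \<in> Collect (nul m)" using nD by simp
      show "G1 x = 0" if "x \<notin> D" for x using that unfolding G1_def by simp
      show "\<bar>G1 x\<bar> \<le> 2 * \<Phi>\<^sup>2" if "x \<in> B" "x \<notin> {}" for x
      proof -
        have "\<bar>G x y\<bar> \<le> 2 * \<Phi>\<^sup>2"
          unfolding G_def using Kb[OF that(1) \<open>y \<in> B\<close>] f(2) fy by (intro G_bound_abs2) auto
        then show ?thesis unfolding G1_def by (auto simp: indicator_def)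
      qed
    qed (use \<Phi> in auto)
    define E where "E = {x. x + y \<in> A}"
    have Em: "E \<in> sets borel" unfolding E_def using Am by measurable
    have nE: "nul m E"
    proof -
      have "y \<notin> ZA" using y(2) unfolding D_def by blast
      then show ?thesis using Em unfolding nul_def ZA_def E_def by blast
    qed
    have Z0: "emeasure P (E - D0) = 0" "emeasure N (E - D0) = 0" using D0(2)[OF nE] by auto
    have b2: "\<bar>sint P N G2\<bar> \<le> 0 * nrm"
      unfolding nrm_def
    proof (rule key_bound[OF MB Bm _ Z0, of UNIV])
      show "E - D0 \<in> sets borel" using Em D0(1) unfolding nul_def by blast
      show "\<bar>G2 x\<bar> \<le> 0" if "x \<in> B" "x \<notin> E - D0" for x
      proof (cases "x \<in> D")
        case True
        then show ?thesis unfolding G2_def by simp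
      next
        case False
        then have "f x = 0" "x \<notin> D0" using A(2) unfolding D_def by auto
        then have "x + y \<notin> A" using that(2) unfolding E_def by auto
        then have "f (x + y) = 0" using A(2) by blast
        then show ?thesis unfolding G2_def G_def using \<open>f x = 0\<close> fy by simp
      qed
    qed auto
    show ?thesis using Hy b1 b2 by simp
  qed
  have T1: "\<bar>sint P N H\<bar> \<le> 5 * \<Phi>\<^sup>2 * nrm * g"
  proof (cases "H \<in> borel_measurable borel")
    case False
    then show ?thesis using sint_nonmeas[OF MB False] g0 nrm0 \<Phi> by simp
  next
    case True
    define H1' where "H1' x = H x * indicator D x" for x
    define H2' where "H2' x = H x * indicator (- D) x" for x
    have H1m: "H1' \<in> borel_measurable borel" unfolding H1'_def using True Dm by measurable
    have H2m: "H2' \<in> borel_measurable borel" unfolding H2'_def using True Dm by measurable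
    have i1: "integrable P H1'" "integrable N H1'"
      using H1 nrm0 by (intro sint_integrable[OF MB Bm, of "{}" _ "3 * \<Phi>\<^sup>2 * nrm"] H1m; auto simp: H1'_def indicator_def)+
    have i2: "integrable P H2'" "integrable N H2'"
      using H1 nrm0 by (intro sint_integrable[OF MB Bm, of "{}" _ "3 * \<Phi>\<^sup>2 * nrm"] H2m; auto simp: H2'_def indicator_def)+
    have "sint P N H = sint P N (\<lambda>x. H1' x + H2' x)"
      unfolding H1'_def H2'_def by (rule arg_cong[where f="sint P N"]) (auto simp: indicator_def fun_eq_iff)
    also have "\<dots> = sint P N H1' + sint P N H2'" by (rule sint_add[OF i1(1) i2(1) i1(2) i2(2)])
    finally have Heq: "sint P N H = sint P N H1' + sint P N H2'" .
    have c1: "\<bar>sint P N H1'\<bar> \<le> (3 * \<Phi>\<^sup>2 * nrm) * g"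
      unfolding g_def
    proof (rule key_bound[OF MB Bm, of "{}"])
      show "D \<in> Collect (nul m)" using nD by simp
      show "H1' x = 0" if "x \<notin> D" for x using that unfolding H1'_def by simp
      show "\<bar>H1' x\<bar> \<le> 3 * \<Phi>\<^sup>2 * nrm" if "x \<in> B" "x \<notin> {}" for x
        using H1[OF that(1)] nrm0 unfolding H1'_def by (auto simp: indicator_def)
    qed (use \<Phi> nrm0 in auto)
    have c2: "\<bar>sint P N H2'\<bar> \<le> (2 * \<Phi>\<^sup>2 * g) * nrm"
      unfolding nrm_def
    proof (rule key_bound[OF MB Bm, of "{}"])
      show "\<bar>H2' x\<bar> \<le> 2 * \<Phi>\<^sup>2 * g" if "x \<in> B" "x \<notin> {}" for x
        using H2[OF that(1)] g0 \<Phi> unfolding H2'_def by (auto simp: indicator_def)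
    qed (use \<Phi> g0 in auto)
    have "\<bar>sint P N H\<bar> \<le> (3 * \<Phi>\<^sup>2 * nrm) * g + (2 * \<Phi>\<^sup>2 * g) * nrm" using Heq c1 c2 by linarith
    then show ?thesis by (simp add: algebra_simps)
  qed
  have "\<bar>LB_pair K \<phi> B f 0 P N l\<bar> \<le> 1/2 * \<bar>sint P N H\<bar> + \<bar>l\<bar> * \<bar>sint P N (\<lambda>x. (0 * \<phi> x - f x) * \<phi> x)\<bar>"
    unfolding LBeq by (simp add: abs_mult abs_triangle_ineq[THEN order_trans])
  also have "\<dots> \<le> 1/2 * (5 * \<Phi>\<^sup>2 * nrm * g) + \<bar>l\<bar> * (\<Phi> * g)"
    using T1 T2 by (intro add_mono mult_left_mono) auto
  also have "\<dots> = (5/2 * \<Phi>\<^sup>2 * nrm + \<bar>l\<bar> * \<Phi>) * g" by (simp add: algebra_simps)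
  finally show ?thesis unfolding nrm_def g_def .
qed



lemma compact_local_bound:
  fixes h :: "real \<Rightarrow> real"
  assumes "compact S" "\<And>t. t \<in> S \<Longrightarrow> \<exists>\<delta>>0. \<forall>s\<in>S. \<bar>s - t\<bar> < \<delta> \<longrightarrow> h s \<le> h t + c"
  shows "\<exists>M. \<forall>s\<in>S. h s \<le> M"
proof -
  have "\<forall>t. \<exists>\<delta>. t \<in> S \<longrightarrow> \<delta> > 0 \<and> (\<forall>s\<in>S. \<bar>s - t\<bar> < \<delta> \<longrightarrow> h s \<le> h t + c)"
    using assms(2) by metis
  then obtain \<delta> where \<delta>: "\<And>t. t \<in> S \<Longrightarrow> \<delta> t > 0 \<and> (\<forall>s\<in>S. \<bar>s - t\<bar> < \<delta> t \<longrightarrow> h s \<le> h t + c)"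
    by (rule choice[THEN exE]) blast
  have cov: "S \<subseteq> (\<Union>t\<in>S. ball t (\<delta> t))" using \<delta> by force
  obtain C' where C': "C' \<subseteq> S" "finite C'" "S \<subseteq> (\<Union>t\<in>C'. ball t (\<delta> t))"
    by (rule compactE_image[OF assms(1) _ cov]) auto
  show ?thesis
  proof (intro exI ballI)
    fix s assume s: "s \<in> S"
    then obtain t where t: "t \<in> C'" "s \<in> ball t (\<delta> t)" using C'(3) by blast
    then have "\<bar>s - t\<bar> < \<delta> t" by (simp add: dist_real_def abs_minus_commute)
    then have "h s \<le> h t + c" using \<delta>[of t] t C'(1) s by blast
    also have "\<dots> \<le> \<bar>h t\<bar> + \<bar>c\<bar>" by simp
    also have "\<bar>h t\<bar> \<le> (\<Sum>u\<in>C'. \<bar>h u\<bar>)" using t(1) C'(2) by (intro member_le_sum) auto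
    finally show "h s \<le> (\<Sum>u\<in>C'. \<bar>h u\<bar>) + \<bar>c\<bar>" by simp
  qed
qed

lemma int_bound:
  fixes F :: "real \<Rightarrow> real"
  assumes "t \<ge> 0" "a \<ge> 0" "\<And>s. s \<in> {0..t} \<Longrightarrow> \<bar>F s\<bar> \<le> a * s ^ n"
  shows "\<bar>LINT s:{0..t}|lborel. F s\<bar> \<le> a * t ^ Suc n / Suc n"
proof -
  have ip: "integrable lborel (\<lambda>s. indicator {0..t} s *\<^sub>R s ^ n)"
    by (rule borel_integrable_compact) (auto intro!: continuous_intros)
  have eqp: "(\<integral>s. a * (s ^ n * indicator {0..t} s) \<partial>lborel) = a * (t ^ Suc n / Suc n)"
    using integral_power[of 0 t n] assms(1) by simp
  have nn: "0 \<le> a * t ^ Suc n / Suc n" using assms by simp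
  show ?thesis
  proof (cases "integrable lborel (\<lambda>s. indicator {0..t} s *\<^sub>R F s)")
    case True
    have "\<bar>LINT s:{0..t}|lborel. F s\<bar> = \<bar>\<integral>s. indicator {0..t} s *\<^sub>R F s \<partial>lborel\<bar>"
      by (simp add: set_lebesgue_integral_def)
    also have "\<dots> \<le> (\<integral>s. a * (s ^ n * indicator {0..t} s) \<partial>lborel)"
    proof (rule integral_abs_bound_integral[OF True])
      show "integrable lborel (\<lambda>s. a * (s ^ n * indicator {0..t} s))"
        using ip by (intro integrable_mult_right) (simp add: mult.commute)
      show "\<bar>indicator {0..t} s *\<^sub>R F s\<bar> \<le> a * (s ^ n * indicator {0..t} s)" for s
        using assms(3)[of s] by (auto simp: indicator_def)
    qed
    finally show ?thesis using eqp by simp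
  next
    case False
    then have "(LINT s:{0..t}|lborel. F s) = 0"
      by (simp add: set_lebesgue_integral_def not_integrable_integral_eq)
    then show ?thesis using nn by simp
  qed
qed



theorem mainTheorem4:
  fixes K :: "real \<Rightarrow> real \<Rightarrow> real" and \<phi> :: "real \<Rightarrow> real" and B :: "real set"
    and m0 :: "real measure" and lam0 :: real
    and P N :: "real \<Rightarrow> real measure" and lam :: "real \<Rightarrow> real"
  assumes K_nonneg: "\<And>x y. x > 0 \<Longrightarrow> y > 0 \<Longrightarrow> K x y \<ge> 0"
    and K_sym: "\<And>x y. x > 0 \<Longrightarrow> y > 0 \<Longrightarrow> K x y = K y x"
    and K_meas: "(\<lambda>(x, y). K x y) \<in> borel_measurable (restrict_space borel ({0<..} \<times> {0<..}))"
    and phi_pos: "\<And>x. x > 0 \<Longrightarrow> \<phi> x > 0"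
    and phi_cont: "continuous_on {0<..} \<phi>"
    and phi_sublin: "\<And>x l. x > 0 \<Longrightarrow> l \<ge> 1 \<Longrightarrow> \<phi> (l * x) \<le> l * \<phi> x"
    and K_bound: "\<And>x y. x > 0 \<Longrightarrow> y > 0 \<Longrightarrow> K x y \<le> \<phi> x * \<phi> y"
    and B_compact: "compact B" and B_sub: "B \<subseteq> {0<..}"
    and m0_MB: "in_MB B m0 (null_measure borel)"
    and lam0_nonneg: "lam0 \<ge> 0"
    and sol_MB: "\<And>t. t \<ge> 0 \<Longrightarrow> in_MB B (P t) (N t)"
    and sol_cont: "tv_continuous P N lam"
    and sol_eq: "\<And>t f a. t \<ge> 0 \<Longrightarrow> f \<in> borel_measurable borel \<Longrightarrow> bounded (range f) \<Longrightarrow>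
        sint (P t) (N t) f + a * lam t
          = (\<integral>x. f x \<partial>m0) + a * lam0
            + (LINT s:{0..t}|lborel. LB_pair K \<phi> B f a (P s) (N s) (lam s))"
  shows "\<forall>t\<ge>0. signed_abs_cont (gamma0 m0) (P t) (N t)"
proof -
  have m: "finite_measure m0" "sets m0 = sets borel" using m0_MB unfolding in_MB_def by auto
  have Bm: "B \<in> sets borel" using B_compact by (simp add: compact_imp_closed)
  obtain \<Phi>0 where \<Phi>0: "\<And>x. x \<in> B \<Longrightarrow> \<bar>\<phi> x\<bar> \<le> \<Phi>0"
  proof -
    have "compact (\<phi> ` B)"
      by (rule compact_continuous_image[OF continuous_on_subset[OF phi_cont B_sub] B_compact])
    then have "bounded (\<phi> ` B)" by (rule compact_imp_bounded)
    then show ?thesis using that by (auto simp: bounded_real)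
  qed
  define \<Phi> where "\<Phi> = max \<Phi>0 0"
  have \<Phi>: "\<Phi> \<ge> 0" "\<And>x. x \<in> B \<Longrightarrow> \<bar>\<phi> x\<bar> \<le> \<Phi>" unfolding \<Phi>_def using \<Phi>0 by force+
  have Kb: "0 \<le> K x y \<and> K x y \<le> \<Phi>\<^sup>2" if "x \<in> B" "y \<in> B" for x y
  proof -
    have p: "x > 0" "y > 0" using that B_sub by auto
    have "\<phi> x * \<phi> y \<le> \<Phi> * \<Phi>"
      using \<Phi>(2)[OF that(1)] \<Phi>(2)[OF that(2)] phi_pos[OF p(1)] phi_pos[OF p(2)] by (intro mult_mono) auto
    then show ?thesis using K_nonneg[OF p] K_bound[OF p] by (simp add: power2_eq_square)
  qed
  define nrm where "nrm s = supv (P s) (N s) {UNIV}" for s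
  define g where "g s = supv (P s) (N s) (Collect (nul m0))" for s
  have nrm0: "nrm s \<ge> 0" if "s \<ge> 0" for s unfolding nrm_def by (rule supv_nonneg[OF sol_MB[OF that]]) simp
  have g0: "g s \<ge> 0" if "s \<ge> 0" for s unfolding g_def by (rule supv_nonneg[OF sol_MB[OF that], of "{}"]) (simp add: nul_empty)
  have gnrm: "g s \<le> nrm s" if "s \<ge> 0" for s
    unfolding g_def
  proof (rule supv_least[of "{}"])
    show "{} \<in> Collect (nul m0)" by (simp add: nul_empty)
    fix f :: "real \<Rightarrow> real" and A :: "real set" assume "f \<in> borel_measurable borel" "\<And>x. \<bar>f x\<bar> \<le> 1"
    then show "\<bar>sint (P s) (N s) f\<bar> \<le> nrm s" unfolding nrm_def
      by (intro supv_upper[OF sol_MB[OF that], of f UNIV]) auto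
  qed
  have bnd: "bounded (range f)" if "\<And>x. \<bar>f x\<bar> \<le> 1" for f :: "real \<Rightarrow> real"
    using that by (auto simp: bounded_real)
  have loc: "\<exists>\<delta>>0. \<forall>s\<in>{0..T}. \<bar>s - t\<bar> < \<delta> \<longrightarrow> nrm s + \<bar>lam s\<bar> \<le> (nrm t + \<bar>lam t\<bar>) + 2"
    if "t \<in> {0..T}" for t T
  proof -
    have t0: "t \<ge> 0" using that by simp
    obtain \<delta> where \<delta>: "\<delta> > 0" "\<And>s. s \<ge> 0 \<Longrightarrow> \<bar>s - t\<bar> < \<delta> \<Longrightarrow> \<bar>lam s - lam t\<bar> < 1 \<and>
        (\<forall>f \<in> borel_measurable borel. (\<forall>x. \<bar>f x\<bar> \<le> 1) \<longrightarrow>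
            \<bar>sint (P s) (N s) f - sint (P t) (N t) f\<bar> \<le> 1)"
      using sol_cont t0 unfolding tv_continuous_def by (metis zero_less_one)
    show ?thesis
    proof (intro exI conjI ballI impI)
      show "\<delta> > 0" by fact
      fix s assume s: "s \<in> {0..T}" "\<bar>s - t\<bar> < \<delta>"
      then have s0: "s \<ge> 0" by simp
      note d = \<delta>(2)[OF s0 s(2)]
      have "nrm s \<le> nrm t + 1" unfolding nrm_def
      proof (rule supv_least[of UNIV])
        fix f :: "real \<Rightarrow> real" and A :: "real set" assume f: "f \<in> borel_measurable borel" "\<And>x. \<bar>f x\<bar> \<le> 1"
        have "\<bar>sint (P t) (N t) f\<bar> \<le> supv (P t) (N t) {UNIV}"
          by (intro supv_upper[OF sol_MB[OF t0], of f UNIV]) (use f in auto)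
        moreover have "\<bar>sint (P s) (N s) f - sint (P t) (N t) f\<bar> \<le> 1" using d f by blast
        ultimately show "\<bar>sint (P s) (N s) f\<bar> \<le> supv (P t) (N t) {UNIV} + 1" by linarith
      qed simp
      moreover have "\<bar>lam s\<bar> \<le> \<bar>lam t\<bar> + 1" using d by linarith
      ultimately show "nrm s + \<bar>lam s\<bar> \<le> (nrm t + \<bar>lam t\<bar>) + 2" by linarith
    qed
  qed
  show ?thesis
  proof (intro allI impI)
    fix T :: real assume T0: "T \<ge> 0"
    obtain M0 where M0: "\<And>s. s \<in> {0..T} \<Longrightarrow> nrm s + \<bar>lam s\<bar> \<le> M0"
      using compact_local_bound[of "{0..T}" "\<lambda>s. nrm s + \<bar>lam s\<bar>" 2] loc by blast
    define M where "M = max M0 0"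
    have M: "M \<ge> 0" "\<And>s. s \<in> {0..T} \<Longrightarrow> nrm s \<le> M \<and> \<bar>lam s\<bar> \<le> M"
      unfolding M_def using M0 nrm0 by (force, smt (verit) M0 atLeastAtMost_iff nrm0)
    define C where "C = 5/2 * \<Phi>\<^sup>2 * M + M * \<Phi>"
    have C0: "C \<ge> 0" unfolding C_def using M \<Phi> by simp
    have LBb: "\<bar>LB_pair K \<phi> B f 0 (P s) (N s) (lam s)\<bar> \<le> C * g s"
      if s: "s \<in> {0..T}" and f: "f \<in> borel_measurable borel" "\<And>x. \<bar>f x\<bar> \<le> 1"
        and A: "nul m0 A" "\<And>x. x \<notin> A \<Longrightarrow> f x = 0" for s f A
    proof -
      have s0: "s \<ge> 0" using s by simp
      have "\<bar>LB_pair K \<phi> B f 0 (P s) (N s) (lam s)\<bar>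
          \<le> (5/2 * \<Phi>\<^sup>2 * nrm s + \<bar>lam s\<bar> * \<Phi>) * g s"
        unfolding nrm_def g_def
        by (rule LB_bound[OF m sol_MB[OF s0] Bm Kb \<Phi>(1) \<Phi>(2) f A]) auto
      also have "\<dots> \<le> C * g s" unfolding C_def
        using M(2)[OF s] \<Phi>(1) g0[OF s0]
        by (intro mult_right_mono add_mono mult_left_mono mult_right_mono) auto
      finally show ?thesis .
    qed
    have m0A: "(\<integral>x. f x \<partial>m0) = 0" if "nul m0 A" "\<And>x. x \<notin> A \<Longrightarrow> f x = 0" for f A
    proof -
      have "emeasure (conv_pow m0 (Suc 0)) A = 0" using that(1) unfolding nul_def by blast
      then have "emeasure m0 A = 0" using conv_return0[OF m] by simp
      moreover have "A \<in> sets m0" using that(1) m(2) unfolding nul_def by simp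
      ultimately have "A \<in> null_sets m0" by (simp add: null_sets_def)
      then have "AE x in m0. x \<notin> A" by (rule AE_not_in)
      then have "AE x in m0. f x = 0" by eventually_elim (use that(2) in auto)
      then show ?thesis by (rule integral_eq_zero_AE)
    qed
    have ind: "\<forall>t\<in>{0..T}. g t \<le> M * C ^ n * t ^ n / fact n" for n
    proof (induction n)
      case 0
      then show ?case using gnrm M(2) by fastforce
    next
      case (Suc n)
      show ?case
      proof
        fix t assume t: "t \<in> {0..T}"
        then have t0: "t \<ge> 0" by simp
        show "g t \<le> M * C ^ Suc n * t ^ Suc n / fact (Suc n)"
          unfolding g_def
        proof (rule supv_least[of "{}"])
          show "{} \<in> Collect (nul m0)" by (simp add: nul_empty)
          fix f :: "real \<Rightarrow> real" and A :: "real set" assume f: "f \<in> borel_measurable borel" "\<And>x. \<bar>f x\<bar> \<le> 1"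
            and A: "A \<in> Collect (nul m0)" "\<And>x. x \<notin> A \<Longrightarrow> f x = 0"
          have "sint (P t) (N t) f + 0 * lam t = (\<integral>x. f x \<partial>m0) + 0 * lam0
              + (LINT s:{0..t}|lborel. LB_pair K \<phi> B f 0 (P s) (N s) (lam s))"
            by (rule sol_eq[OF t0 f(1) bnd[OF f(2)]])
          then have eq: "sint (P t) (N t) f = (LINT s:{0..t}|lborel. LB_pair K \<phi> B f 0 (P s) (N s) (lam s))"
            using m0A[of A f] A by simp
          have "\<bar>LINT s:{0..t}|lborel. LB_pair K \<phi> B f 0 (P s) (N s) (lam s)\<bar>
              \<le> (C * (M * C ^ n / fact n)) * t ^ Suc n / Suc n"
          proof (rule int_bound[OF t0])
            show "0 \<le> C * (M * C ^ n / fact n)" using C0 M(1) by simp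
            fix s assume s: "s \<in> {0..t}"
            then have sT: "s \<in> {0..T}" using t by auto
            have "\<bar>LB_pair K \<phi> B f 0 (P s) (N s) (lam s)\<bar> \<le> C * g s"
              using LBb[OF sT f] A by auto
            also have "\<dots> \<le> C * (M * C ^ n * s ^ n / fact n)"
              using Suc.IH sT C0 by (intro mult_left_mono) auto
            finally show "\<bar>LB_pair K \<phi> B f 0 (P s) (N s) (lam s)\<bar> \<le> C * (M * C ^ n / fact n) * s ^ n"
              by (simp add: field_simps)
          qed
          also have "\<dots> = M * C ^ Suc n * t ^ Suc n / fact (Suc n)"
            by (simp add: field_simps)
          finally show "\<bar>sint (P t) (N t) f\<bar> \<le> M * C ^ Suc n * t ^ Suc n / fact (Suc n)"
            using eq by simp
        qed
      qed
    qed
    have gT: "g T = 0"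
    proof -
      have "(\<lambda>n. inverse (fact n) * (C * T) ^ n) \<longlonglongrightarrow> 0"
        by (rule summable_LIMSEQ_zero[OF summable_exp])
      then have lim: "(\<lambda>n. M * (inverse (fact n) * (C * T) ^ n)) \<longlonglongrightarrow> 0"
        using tendsto_mult_right_zero by blast
      have "g T \<le> 0"
      proof (rule LIMSEQ_le_const[OF lim])
        show "\<exists>N. \<forall>n\<ge>N. g T \<le> M * (inverse (fact n) * (C * T) ^ n)"
        proof (intro exI allI impI)
          fix n :: nat
          have "g T \<le> M * C ^ n * T ^ n / fact n" using ind[of n] T0 by auto
          also have "\<dots> = M * (inverse (fact n) * (C * T) ^ n)"
            by (simp add: field_simps power_mult_distrib)
          finally show "g T \<le> M * (inverse (fact n) * (C * T) ^ n)" .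
        qed
      qed
      then show ?thesis using g0[OF T0] by simp
    qed
    show "signed_abs_cont (gamma0 m0) (P T) (N T)"
      unfolding signed_abs_cont_def
    proof
      fix A assume A: "A \<in> null_sets (gamma0 m0)"
      have nA: "nul m0 A" by (rule gamma0_null[OF m A])
      have "\<bar>sint (P T) (N T) (indicator A)\<bar> \<le> g T" unfolding g_def
        using nA by (intro supv_upper[OF sol_MB[OF T0], of _ A]) (auto simp: nul_def indicator_def)
      then have "sint (P T) (N T) (indicator A) = 0" using gT by simp
      moreover have "sint (P T) (N T) (indicator A) = measure (P T) A - measure (N T) A"
        using MB_facts[OF sol_MB[OF T0]] unfolding sint_def by simp
      ultimately show "measure (P T) A - measure (N T) A = 0" by simp
    qed
  qed
qed

end
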